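(* Let $E$ be a finite extension of $\mathbb{Q}_p$ with ring of integers $\mathcal{O}$ and maximal ideal $\lambda$, let $n \ge 1$, let $M = (\mathcal{O}/\lambda^n)^2$ and let $A \in \mathrm{End}_{\mathcal{O}}(M)$ with characteristic polynomial $f_A(X)$. Suppose there exist $\alpha, \beta \in \mathcal{O}/\lambda^n$ such that $f_A(X) = (X-\alpha)(X-\beta)$ and $\alpha - \beta$ is divisible exactly by $\lambda^m$ for some integer $0 \le m \le n-1$. Then there exist $e_1, e_2 \in M$ with $\lambda^{n-m-1}e_1 \neq 0$ and $\lambda^{n-m-1}e_2 \neq 0$ such that $Ae_1 = \alpha e_1$ and $Ae_2 = \beta e_2$. *)

theory Defs
  imports "Jordan_Normal_Form.Char_Poly"
begin

text \<open>A ring O (an integral domain) together with a uniformizer pi is the ring of integers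
of a finite extension of Q_p iff: O is a discrete valuation ring with uniformizer pi
(pi a nonzero non-unit and every nonzero element is a unit times a power of pi),
O is complete for the pi-adic topology, O has characteristic 0, and the residue
field O/(pi) is finite of characteristic p.\<close>

definition is_dvr_uniformizer :: "'a::idom \<Rightarrow> bool" where
  "is_dvr_uniformizer \<pi> \<longleftrightarrow> \<pi> \<noteq> 0 \<and> \<not> \<pi> dvd 1 \<and>
     (\<forall>x. x \<noteq> 0 \<longrightarrow> (\<exists>u k. u dvd 1 \<and> x = u * \<pi> ^ k))"

definition adically_complete :: "'a::idom \<Rightarrow> bool" where
  "adically_complete \<pi> \<longleftrightarrow>
     (\<forall>x :: nat \<Rightarrow> 'a.
        (\<forall>k. \<exists>N. \<forall>i\<ge>N. \<forall>j\<ge>N. \<pi> ^ k dvd (x i - x j)) \<longrightarrow>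
        (\<exists>L. \<forall>k. \<exists>N. \<forall>i\<ge>N. \<pi> ^ k dvd (x i - L)))"

definition p_adic_integer_ring :: "nat \<Rightarrow> 'a::idom \<Rightarrow> bool" where
  "p_adic_integer_ring p \<pi> \<longleftrightarrow>
     prime p \<and> is_dvr_uniformizer \<pi> \<and> adically_complete \<pi> \<and> CHAR('a) = 0 \<and>
     \<pi> dvd of_nat p \<and> finite (UNIV // {(x, y). \<pi> dvd (x - y)})"

text \<open>Congruence modulo lambda^n = (pi^n), i.e. equality in O/lambda^n, for elements,
vectors and polynomials (all given by lifts to O).\<close>

definition cong_pow :: "'a::idom \<Rightarrow> nat \<Rightarrow> 'a \<Rightarrow> 'a \<Rightarrow> bool" where
  "cong_pow \<pi> n x y \<longleftrightarrow> \<pi> ^ n dvd (x - y)"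

definition vec_cong_pow :: "'a::idom \<Rightarrow> nat \<Rightarrow> 'a vec \<Rightarrow> 'a vec \<Rightarrow> bool" where
  "vec_cong_pow \<pi> n v w \<longleftrightarrow> (\<forall>i < dim_vec v. cong_pow \<pi> n (v $ i) (w $ i))"

definition poly_cong_pow :: "'a::idom \<Rightarrow> nat \<Rightarrow> 'a poly \<Rightarrow> 'a poly \<Rightarrow> bool" where
  "poly_cong_pow \<pi> n f g \<longleftrightarrow> (\<forall>i. cong_pow \<pi> n (coeff f i) (coeff g i))"

end

theory Submission
  imports Defs
begin
lemma det2: assumes "(B :: 'b::comm_ring_1 mat) \<in> carrier_mat 2 2"
  shows "det B = B$$(0,0)*B$$(1,1) - B$$(0,1)*B$$(1,0)"
proof -
  have "det B = (\<Sum>i<2. B $$ (i,0) * cofactor B i 0)"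
    by (rule laplace_expansion_column[OF assms]) simp
  also have "\<dots> = B $$ (0,0) * cofactor B 0 0 + B $$ (1,0) * cofactor B 1 0"
    by (simp add: numeral_2_eq_2)
  also have "cofactor B 0 0 = B$$(1,1)" unfolding cofactor_def
    using assms by (subst det_single) (auto simp: mat_delete_def)
  also have "cofactor B 1 0 = - B$$(0,1)" unfolding cofactor_def
    using assms by (subst det_single) (auto simp: mat_delete_def)
  finally show ?thesis by (simp add: algebra_simps)
qed
lemma cp2: assumes "(A :: 'b::comm_ring_1 mat) \<in> carrier_mat 2 2"
  shows "char_poly A = [:A$$(0,0)*A$$(1,1) - A$$(0,1)*A$$(1,0), -(A$$(0,0)+A$$(1,1)), 1:]"
  unfolding char_poly_defs using assms
  by (subst det2) (auto simp: algebra_simps)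

definition v2 :: "'b::zero \<Rightarrow> 'b \<Rightarrow> 'b vec" where "v2 x y = vec 2 (\<lambda>i. if i = 0 then x else y)"

lemma v2_carrier: "v2 x y \<in> carrier_vec 2" by (simp add: v2_def)

lemma less2: "(i::nat) < 2 \<longleftrightarrow> i = 0 \<or> i = 1" by auto

lemma mulv2: assumes "(A :: 'b::comm_ring_1 mat) \<in> carrier_mat 2 2"
  shows "A *\<^sub>v v2 x y = v2 (A$$(0,0)*x + A$$(0,1)*y) (A$$(1,0)*x + A$$(1,1)*y)"
  using assms by (auto simp: v2_def mult_mat_vec_def scalar_prod_def numeral_2_eq_2 row_def less_Suc_eq intro!: eq_vecI)

lemma nz: fixes \<pi> :: "'b::idom"
  assumes "\<pi> \<noteq> 0" "m < n" "\<not> (\<pi>^(m+1) dvd x \<and> \<pi>^(m+1) dvd y)"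
  shows "\<not> vec_cong_pow \<pi> n ((\<pi> ^ (n - m - 1)) \<cdot>\<^sub>v v2 x y) (0\<^sub>v 2)"
proof
  assume h: "vec_cong_pow \<pi> n ((\<pi> ^ (n - m - 1)) \<cdot>\<^sub>v v2 x y) (0\<^sub>v 2)"
  have "n = (n-m-1)+(m+1)" using assms(2) by simp
  then have pn: "\<pi>^n = \<pi>^(n-m-1) * \<pi>^(m+1)" by (metis power_add)
  have nz': "\<pi>^(n-m-1) \<noteq> 0" using assms(1) by simp
  have "\<pi>^n dvd \<pi>^(n-m-1) * x" "\<pi>^n dvd \<pi>^(n-m-1) * y" using h
    by (auto simp: vec_cong_pow_def cong_pow_def v2_def dest: spec[of _ 0] spec[of _ 1])
  then have "\<pi>^(n-m-1) * \<pi>^(m+1) dvd \<pi>^(n-m-1) * x" "\<pi>^(n-m-1) * \<pi>^(m+1) dvd \<pi>^(n-m-1) * y"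
    unfolding pn by simp_all
  then have "\<pi>^(m+1) dvd x" "\<pi>^(m+1) dvd y" using nz' by (metis dvd_mult_cancel_left)+
  then show False using assms(3) by blast
qed

lemma eig: fixes \<pi> :: "'b::idom"
  assumes A: "A \<in> carrier_mat 2 2"
  and h0: "\<pi>^n dvd (A$$(0,0)*A$$(1,1) - A$$(0,1)*A$$(1,0)) - l * u"
  and h1: "\<pi>^n dvd (l + u) - (A$$(0,0)+A$$(1,1))"
  shows "vec_cong_pow \<pi> n (A *\<^sub>v v2 (A$$(1,1) - l) (- A$$(1,0))) (l \<cdot>\<^sub>v v2 (A$$(1,1) - l) (- A$$(1,0)))"
    "vec_cong_pow \<pi> n (A *\<^sub>v v2 (- A$$(0,1)) (A$$(0,0) - l)) (l \<cdot>\<^sub>v v2 (- A$$(0,1)) (A$$(0,0) - l))"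
proof -
  define a b c d where "a = A$$(0,0)" "b = A$$(0,1)" "c = A$$(1,0)" "d = A$$(1,1)"
  have key: "\<pi>^n dvd (a*d - b*c) - l*(a+d) + l*l"
  proof -
    have eq: "(a*d - b*c) - l*(a+d) + l*l = ((a*d - b*c) - l*u) + l * ((l+u) - (a+d))"
      by (simp add: algebra_simps)
    have dv: "\<pi>^n dvd ((a*d - b*c) - l*u) + l * ((l+u) - (a+d))"
      using h0 h1 unfolding a_b_c_d_def by (intro dvd_add dvd_mult) 
    show ?thesis unfolding eq by (rule dv)
  qed
  have e1: "(a*(d-l) + b*(-c)) - l*(d-l) = (a*d - b*c) - l*(a+d) + l*l" by (simp add: algebra_simps)
  have e2: "(c*(-b) + d*(a-l)) - l*(a-l) = (a*d - b*c) - l*(a+d) + l*l" by (simp add: algebra_simps)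
  have k1: "\<pi>^n dvd (a*(d-l) + b*(-c)) - l*(d-l)" unfolding e1 by (rule key)
  have k2: "\<pi>^n dvd (c*(-b) + d*(a-l)) - l*(a-l)" unfolding e2 by (rule key)
  have e3: "(c*(d-l) + d*(-c)) - l*(-c) = 0" by (simp add: algebra_simps)
  have e4: "(a*(-b) + b*(a-l)) - l*(-b) = 0" by (simp add: algebra_simps)
  show "vec_cong_pow \<pi> n (A *\<^sub>v v2 (A$$(1,1) - l) (- A$$(1,0))) (l \<cdot>\<^sub>v v2 (A$$(1,1) - l) (- A$$(1,0)))"
    unfolding mulv2[OF A] a_b_c_d_def[symmetric] vec_cong_pow_def cong_pow_def
    using k1 e3 by (auto simp: v2_def less2 algebra_simps)
  show "vec_cong_pow \<pi> n (A *\<^sub>v v2 (- A$$(0,1)) (A$$(0,0) - l)) (l \<cdot>\<^sub>v v2 (- A$$(0,1)) (A$$(0,0) - l))"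
    unfolding mulv2[OF A] a_b_c_d_def[symmetric] vec_cong_pow_def cong_pow_def
    using k2 e4 by (auto simp: v2_def less2 algebra_simps)
qed

lemma notall: fixes \<pi> :: "'b::idom"
  assumes "m + 1 \<le> n" "\<pi>^n dvd (l + u) - (a+d)" "\<not> \<pi>^(m+1) dvd (u - l)"
  shows "\<not> (\<pi>^(m+1) dvd (d - l) \<and> \<pi>^(m+1) dvd (- c)) \<or> \<not> (\<pi>^(m+1) dvd (-b) \<and> \<pi>^(m+1) dvd (a - l))"
proof (rule ccontr)
  assume "\<not> ?thesis"
  then have "\<pi>^(m+1) dvd (d - l)" "\<pi>^(m+1) dvd (a - l)" by auto
  moreover have "\<pi>^(m+1) dvd (l + u) - (a+d)"
    using assms(2) le_imp_power_dvd[OF assms(1)] dvd_trans by blast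
  ultimately have dv: "\<pi>^(m+1) dvd ((d-l) + (a-l)) + ((l + u) - (a+d))" by (intro dvd_add)
  have eq: "((d-l) + (a-l)) + ((l + u) - (a+d)) = u - l" by (simp add: algebra_simps)
  from dv have "\<pi>^(m+1) dvd u - l" unfolding eq .
  then show False using assms(3) by simp
qed

theorem lemma4p1:
  fixes p :: nat and \<pi> :: "'a::idom" and n m :: nat
    and A :: "'a mat" and \<alpha> \<beta> :: 'a
  assumes "p_adic_integer_ring p \<pi>"
    and "n \<ge> 1"
    and "A \<in> carrier_mat 2 2"
    and "poly_cong_pow \<pi> n (char_poly A) ([:- \<alpha>, 1:] * [:- \<beta>, 1:])"
    and "m \<le> n - 1"
    and "\<pi> ^ m dvd (\<alpha> - \<beta>)" and "\<not> \<pi> ^ (m + 1) dvd (\<alpha> - \<beta>)"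
  shows "\<exists>e1 e2. e1 \<in> carrier_vec 2 \<and> e2 \<in> carrier_vec 2 \<and>
           \<not> vec_cong_pow \<pi> n ((\<pi> ^ (n - m - 1)) \<cdot>\<^sub>v e1) (0\<^sub>v 2) \<and>
           \<not> vec_cong_pow \<pi> n ((\<pi> ^ (n - m - 1)) \<cdot>\<^sub>v e2) (0\<^sub>v 2) \<and>
           vec_cong_pow \<pi> n (A *\<^sub>v e1) (\<alpha> \<cdot>\<^sub>v e1) \<and>
           vec_cong_pow \<pi> n (A *\<^sub>v e2) (\<beta> \<cdot>\<^sub>v e2)"
proof -
  have pi0: "\<pi> \<noteq> 0" using assms(1) by (simp add: p_adic_integer_ring_def is_dvr_uniformizer_def)
  have mn: "m < n" "m + 1 \<le> n" using assms(2,5) by auto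
  define a b c d where "a = A$$(0,0)" "b = A$$(1,0)" "c = A$$(0,1)" "d = A$$(1,1)"
  have cc: "\<And>i. \<pi>^n dvd coeff (char_poly A) i - coeff ([:- \<alpha>, 1:] * [:- \<beta>, 1:]) i"
    using assms(4) unfolding poly_cong_pow_def cong_pow_def by blast
  have c0: "\<pi>^n dvd (A$$(0,0)*A$$(1,1) - A$$(0,1)*A$$(1,0)) - (-\<alpha>)*(-\<beta>)"
    using cc[of 0] unfolding cp2[OF assms(3)] by (simp add: ac_simps)
  have c1: "\<pi>^n dvd (-(A$$(0,0)+A$$(1,1))) - (-\<alpha> - \<beta>)"
    using cc[of 1] unfolding cp2[OF assms(3)] by (simp add: ac_simps)
  have h0a: "\<pi>^n dvd (A$$(0,0)*A$$(1,1) - A$$(0,1)*A$$(1,0)) - \<alpha>*\<beta>" using c0 by simp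
  have h0b: "\<pi>^n dvd (A$$(0,0)*A$$(1,1) - A$$(0,1)*A$$(1,0)) - \<beta>*\<alpha>" using c0 by (simp add: mult.commute)
  have eq: "(-(A$$(0,0)+A$$(1,1))) - (-\<alpha> - \<beta>) = (\<alpha> + \<beta>) - (A$$(0,0)+A$$(1,1))" by (simp add: algebra_simps)
  from c1 have h1a: "\<pi>^n dvd (\<alpha> + \<beta>) - (A$$(0,0)+A$$(1,1))" unfolding eq .
  then have h1b: "\<pi>^n dvd (\<beta> + \<alpha>) - (A$$(0,0)+A$$(1,1))" by (simp add: add.commute)
  have nd1: "\<not> \<pi>^(m+1) dvd (\<beta> - \<alpha>)" using assms(7) by (metis dvd_minus_iff minus_diff_eq)
  have ex: "\<exists>e. e \<in> carrier_vec 2 \<and> \<not> vec_cong_pow \<pi> n ((\<pi> ^ (n - m - 1)) \<cdot>\<^sub>v e) (0\<^sub>v 2) \<and>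
           vec_cong_pow \<pi> n (A *\<^sub>v e) (l \<cdot>\<^sub>v e)"
    if h0: "\<pi>^n dvd (A$$(0,0)*A$$(1,1) - A$$(0,1)*A$$(1,0)) - l * u"
    and h1: "\<pi>^n dvd (l + u) - (A$$(0,0)+A$$(1,1))"
    and nd: "\<not> \<pi>^(m+1) dvd (u - l)" for l u
  proof -
    note E = eig[OF assms(3) h0 h1]
    from notall[OF mn(2) h1 nd] show ?thesis
    proof
      assume "\<not> (\<pi>^(m+1) dvd (A$$(1,1) - l) \<and> \<pi>^(m+1) dvd (- A$$(1,0)))"
      then show ?thesis using E(1) nz[OF pi0 mn(1)] v2_carrier by blast
    next
      assume "\<not> (\<pi>^(m+1) dvd (- A$$(0,1)) \<and> \<pi>^(m+1) dvd (A$$(0,0) - l))"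
      then show ?thesis using E(2) nz[OF pi0 mn(1)] v2_carrier by blast
    qed
  qed
  from ex[OF h0a h1a nd1] ex[OF h0b h1b assms(7)] show ?thesis by blast
qed
end
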